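(* For every natural number $n\ge1$ and every balanced $\mathrm{HS}$ formula $\psi$ over $\{p\}$ with $|\psi|\le n$, $K_n\models_{\mathsf{st}}\psi$ if and only if $M_n\models_{\mathsf{st}}\psi$.
   Context: A Kripke structure over $\{p\}$ is $K=(\{p\},S,\delta,\mu,s_0)$ with states $S$, left-total $\delta\subseteq S\times S$, labelling $\mu:S\to2^{\{p\}}$, initial state $s_0$. A trace is a non-empty finite prefix of an infinite state sequence following $\delta$; initial if it starts at the initial state. For a finite word $w=w(0)\cdots w(n)$, $\mathrm{Pref}(w)=\{w[0,i]\mid0\le i\le n-1\}$, $\mathrm{Suff}(w)=\{w[i,n]\mid1\le i\le n\}$. For $n\ge1$: $S_n=\{s_0,s_1,\dots,s_{2n},t\}$, $\delta_n=\{(s_0,s_0),(s_0,s_1),(s_1,s_2),\dots,(s_{2n-1},s_{2n}),(s_{2n},t),(t,t)\}$, $\mu_n(s_i)=\emptyset$ for $0\le i\le 2n$, $\mu_n(t)=\{p\}$; $K_n=(\{p\},S_n,\delta_n,\mu_n,s_0)$ and $M_n=(\{p\},S_n,\delta_n,\mu_n,s_1)$ (they differ only in the initial state). $\mathrm{HS}$ formulas here are built from $p$, $\neg$, $\wedge$ and the primitive modalities $\langle B\rangle,\langle E\rangle,\langle\bar B\rangle,\langle\bar E\rangle$ (all other $\mathrm{HS}$ modalities being abbreviations); $|\psi|$ is the size of $\psi$ (its number of symbols/subformulas). $\psi$ is balanced if for each subformula $\langle B\rangle\theta$ or $\langle\bar B\rangle\theta$, $\theta$ has the form $\theta_1\wedge\theta_2$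 with $|\theta_1|=|\theta_2|$. State-based semantics over traces of $K$: $\rho\models p$ iff $p\in\mu(s)$ for every state $s$ of $\rho$; $\rho\models\langle B\rangle\psi$ iff some $\rho'\in\mathrm{Pref}(\rho)$ satisfies $\psi$; $\langle E\rangle\psi$: some $\rho'\in\mathrm{Suff}(\rho)$; $\langle\bar B\rangle\psi$: some trace $\rho'$ with $\rho\in\mathrm{Pref}(\rho')$; $\langle\bar E\rangle\psi$: some trace $\rho'$ with $\rho\in\mathrm{Suff}(\rho')$; Booleans as usual. $K\models_{\mathsf{st}}\psi$ iff every initial trace of $K$ satisfies $\psi$. *)

theory Defs
  imports Main
begin

datatype AP = P

record 's kripke =
  states :: "'s set"
  trans  :: "('s \<times> 's) set"
  lab    :: "'s \<Rightarrow> AP set"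
  init   :: 's

datatype hs =
    Prop
  | Neg hs
  | Conj hs hs
  | DiaB hs
  | DiaE hs
  | DiaBbar hs
  | DiaEbar hs

fun hs_size :: "hs \<Rightarrow> nat" where
  "hs_size Prop = 1"
| "hs_size (Neg f) = 1 + hs_size f"
| "hs_size (Conj f g) = 1 + hs_size f + hs_size g"
| "hs_size (DiaB f) = 1 + hs_size f"
| "hs_size (DiaE f) = 1 + hs_size f"
| "hs_size (DiaBbar f) = 1 + hs_size f"
| "hs_size (DiaEbar f) = 1 + hs_size f"

fun balanced :: "hs \<Rightarrow> bool" where
  "balanced Prop = True"
| "balanced (Neg f) = balanced f"
| "balanced (Conj f g) = (balanced f \<and> balanced g)"
| "balanced (DiaB f) = (balanced f \<and> (\<exists>a b. f = Conj a b \<and> hs_size a = hs_size b))"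
| "balanced (DiaE f) = balanced f"
| "balanced (DiaBbar f) = (balanced f \<and> (\<exists>a b. f = Conj a b \<and> hs_size a = hs_size b))"
| "balanced (DiaEbar f) = balanced f"

definition is_trace :: "'s kripke \<Rightarrow> 's list \<Rightarrow> bool" where
  "is_trace K \<rho> \<longleftrightarrow> \<rho> \<noteq> [] \<and>
     (\<exists>f. (\<forall>i. f i \<in> states K \<and> (f i, f (Suc i)) \<in> trans K) \<and> \<rho> = map f [0..<length \<rho>])"

definition is_init_trace :: "'s kripke \<Rightarrow> 's list \<Rightarrow> bool" where
  "is_init_trace K \<rho> \<longleftrightarrow> is_trace K \<rho> \<and> hd \<rho> = init K"

definition Pref :: "'s list \<Rightarrow> 's list set" where
  "Pref w = {take (Suc i) w | i. i < length w - 1}"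

definition Suff :: "'s list \<Rightarrow> 's list set" where
  "Suff w = {drop i w | i. 1 \<le> i \<and> i < length w}"

fun sat :: "'s kripke \<Rightarrow> 's list \<Rightarrow> hs \<Rightarrow> bool" where
  "sat K \<rho> Prop = (\<forall>s\<in>set \<rho>. P \<in> lab K s)"
| "sat K \<rho> (Neg f) = (\<not> sat K \<rho> f)"
| "sat K \<rho> (Conj f g) = (sat K \<rho> f \<and> sat K \<rho> g)"
| "sat K \<rho> (DiaB f) = (\<exists>\<rho>'\<in>Pref \<rho>. sat K \<rho>' f)"
| "sat K \<rho> (DiaE f) = (\<exists>\<rho>'\<in>Suff \<rho>. sat K \<rho>' f)"
| "sat K \<rho> (DiaBbar f) = (\<exists>\<rho>'. is_trace K \<rho>' \<and> \<rho> \<in> Pref \<rho>' \<and> sat K \<rho>' f)"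
| "sat K \<rho> (DiaEbar f) = (\<exists>\<rho>'. is_trace K \<rho>' \<and> \<rho> \<in> Suff \<rho>' \<and> sat K \<rho>' f)"

definition models_st :: "'s kripke \<Rightarrow> hs \<Rightarrow> bool" where
  "models_st K \<psi> \<longleftrightarrow> (\<forall>\<rho>. is_init_trace K \<rho> \<longrightarrow> sat K \<rho> \<psi>)"

(* States encoded as naturals: s_i = i for 0 <= i <= 2n, t = 2n+1 *)
definition Sn :: "nat \<Rightarrow> nat set" where
  "Sn n = {0..2*n+1}"

definition deltan :: "nat \<Rightarrow> (nat \<times> nat) set" where
  "deltan n = {(0,0)} \<union> {(i, Suc i) | i. i < 2*n+1} \<union> {(2*n+1, 2*n+1)}"

definition mun :: "nat \<Rightarrow> nat \<Rightarrow> AP set" where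
  "mun n s = (if s = 2*n+1 then {P} else {})"

definition Kn :: "nat \<Rightarrow> nat kripke" where
  "Kn n = \<lparr>states = Sn n, trans = deltan n, lab = mun n, init = 0\<rparr>"

definition Mn :: "nat \<Rightarrow> nat kripke" where
  "Mn n = \<lparr>states = Sn n, trans = deltan n, lab = mun n, init = 1\<rparr>"

end

theory Submission
  imports Defs
begin

definition stt :: "nat \<Rightarrow> int \<Rightarrow> int" where
  "stt n q = min (max q 0) (2 * int n + 1)"

definition tr :: "nat \<Rightarrow> int \<Rightarrow> nat \<Rightarrow> nat list" where
  "tr n u m = map (\<lambda>i. nat (stt n (u + int i))) [0..<m]"

lemma deltan_iff:
  "(a, b) \<in> deltan n \<longleftrightarrow> (a = 0 \<and> b = 0) \<or> (a < 2*n+1 \<and> b = Suc a) \<or> (a = 2*n+1 \<and> b = 2*n+1)"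
  unfolding deltan_def by auto

lemma path_rep:
  assumes "\<forall>i. f i \<in> Sn n \<and> (f i, f (Suc i)) \<in> deltan n"
  shows "\<exists>u. \<forall>i\<le>N. f i = nat (stt n (u + int i))"
proof (induction N)
  case 0
  have "f 0 \<le> 2*n+1" using assms unfolding Sn_def by auto
  then show ?case by (intro exI[of _ "int (f 0)"]) (auto simp: stt_def)
next
  case (Suc N)
  then obtain u where u: "\<forall>i\<le>N. f i = nat (stt n (u + int i))" by blast
  have tN: "(f N, f (Suc N)) \<in> deltan n" using assms by auto
  have fN: "f N = nat (stt n (u + int N))" using u by auto
  show ?case
  proof (cases "f N = 0")
    case True
    have z: "\<forall>i\<le>N. f i = 0"
    proof (intro allI impI)
      fix i assume "i \<le> N"
      then have "f i = nat (stt n (u + int i))" using u by auto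
      moreover have "u + int N \<le> 0" using True fN by (auto simp: stt_def)
      ultimately show "f i = 0" using \<open>i \<le> N\<close> by (auto simp: stt_def)
    qed
    from tN True have "f (Suc N) = 0 \<or> f (Suc N) = 1" by (auto simp: deltan_iff)
    then show ?thesis
    proof
      assume h: "f (Suc N) = 0"
      show ?thesis
        by (rule exI[of _ "- int N - 1"]) (use z h in \<open>auto simp: stt_def le_Suc_eq\<close>)
    next
      assume h: "f (Suc N) = 1"
      show ?thesis
        by (rule exI[of _ "- int N"]) (use z h in \<open>auto simp: stt_def le_Suc_eq\<close>)
    qed
  next
    case False
    then have "(f N < 2*n+1 \<and> f (Suc N) = Suc (f N)) \<or> (f N = 2*n+1 \<and> f (Suc N) = 2*n+1)"
      using tN by (auto simp: deltan_iff)
    then have "f (Suc N) = nat (stt n (u + int (Suc N)))"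
      using fN False by (auto simp: stt_def split: if_splits)
    then show ?thesis using u by (intro exI[of _ u]) (auto simp: le_Suc_eq)
  qed
qed

lemma trace_iff: "is_trace (Kn n) \<rho> \<longleftrightarrow> (\<exists>u m. 1 \<le> m \<and> \<rho> = tr n u m)"
proof
  assume "is_trace (Kn n) \<rho>"
  then obtain f where f: "\<forall>i. f i \<in> Sn n \<and> (f i, f (Suc i)) \<in> deltan n"
    and r: "\<rho> = map f [0..<length \<rho>]" and ne: "\<rho> \<noteq> []"
    unfolding is_trace_def Kn_def by auto
  obtain u where u: "\<forall>i\<le>length \<rho>. f i = nat (stt n (u + int i))"
    using path_rep[OF f] by blast
  have "\<rho> = tr n u (length \<rho>)" unfolding tr_def
    by (subst r) (auto intro!: map_cong u[rule_format])
  then show "\<exists>u m. 1 \<le> m \<and> \<rho> = tr n u m" using ne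
    by (intro exI[of _ u] exI[of _ "length \<rho>"]) (auto simp: Suc_le_eq)
next
  assume "\<exists>u m. 1 \<le> m \<and> \<rho> = tr n u m"
  then obtain u m where m: "1 \<le> m" and r: "\<rho> = tr n u m" by blast
  define f where "f i = nat (stt n (u + int i))" for i
  have "\<forall>i. f i \<in> Sn n \<and> (f i, f (Suc i)) \<in> deltan n"
  proof
    fix i
    show "f i \<in> Sn n \<and> (f i, f (Suc i)) \<in> deltan n"
      unfolding f_def Sn_def deltan_iff stt_def by auto
  qed
  moreover have "\<rho> = map f [0..<length \<rho>]" using r by (simp add: tr_def f_def)
  moreover have "\<rho> \<noteq> []" using r m by (auto simp: tr_def)
  ultimately show "is_trace (Kn n) \<rho>" unfolding is_trace_def Kn_def by auto
qed

definition Yf :: "nat \<Rightarrow> int \<Rightarrow> nat \<Rightarrow> int" where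
  "Yf n u m = max 0 (u + int m - max u (2 * int n + 1))"
definition Xf :: "nat \<Rightarrow> int \<Rightarrow> nat \<Rightarrow> int" where
  "Xf n u m = int m - Yf n u m"
definition Ef :: "nat \<Rightarrow> int \<Rightarrow> nat \<Rightarrow> int" where
  "Ef n u m = (if Yf n u m = 0 then 2 * int n - stt n (u + int m - 1) else 0)"

lemma tr_Suc: "tr n u (Suc m) = tr n u m @ [nat (stt n (u + int m))]"
  by (simp add: tr_def)

lemma Y_count: "Yf n u m = int (length (filter (\<lambda>s. s = 2*n+1) (tr n u m)))"
proof (induction m)
  case 0
  then show ?case by (simp add: Yf_def tr_def)
next
  case (Suc m)
  have "Yf n u (Suc m) = Yf n u m + (if u + int m \<ge> 2 * int n + 1 then 1 else 0)"
    unfolding Yf_def by auto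
  moreover have "(nat (stt n (u + int m)) = 2*n+1) \<longleftrightarrow> u + int m \<ge> 2 * int n + 1"
    unfolding stt_def by auto
  ultimately show ?case using Suc by (simp add: tr_Suc)
qed

lemma last_tr: "1 \<le> m \<Longrightarrow> last (tr n u m) = nat (stt n (u + int m - 1))"
  by (cases m) (auto simp: tr_Suc)

lemma length_tr[simp]: "length (tr n u m) = m"
  by (simp add: tr_def)

lemma feat_inv:
  assumes "tr n u m = tr n u1 m" "1 \<le> m"
  shows "Yf n u m = Yf n u1 m" "Xf n u m = Xf n u1 m" "Ef n u m = Ef n u1 m"
proof -
  show Y: "Yf n u m = Yf n u1 m" using assms by (simp add: Y_count)
  then show "Xf n u m = Xf n u1 m" by (simp add: Xf_def)
  have "stt n (u + int m - 1) = stt n (u1 + int m - 1)"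
  proof -
    have "nat (stt n (u + int m - 1)) = nat (stt n (u1 + int m - 1))"
      using last_tr[OF assms(2), of n u] last_tr[OF assms(2), of n u1] assms(1) by simp
    moreover have "stt n q \<ge> 0" for q by (simp add: stt_def)
    ultimately show ?thesis by (metis eq_nat_nat_iff)
  qed
  then show "Ef n u m = Ef n u1 m" using Y by (simp add: Ef_def)
qed

lemma tr_shift:
  assumes "u = u1 \<or> (u + int m \<le> 1 \<and> u1 + int m \<le> 1) \<or> (u \<ge> 2 * int n + 1 \<and> u1 \<ge> 2 * int n + 1)"
  shows "tr n u m = tr n u1 m"
  using assms unfolding tr_def by (auto simp: stt_def)

lemma take_tr: "k \<le> m \<Longrightarrow> take k (tr n u m) = tr n u k"
  by (simp add: tr_def take_map)

lemma drop_tr: "c \<le> m \<Longrightarrow> drop c (tr n u m) = tr n (u + int c) (m - c)"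
  by (rule nth_equalityI) (auto simp: tr_def algebra_simps)

lemma Pref_tr: "\<sigma> \<in> Pref (tr n u m) \<longleftrightarrow> (\<exists>k. 1 \<le> k \<and> k < m \<and> \<sigma> = tr n u k)"
proof
  assume "\<sigma> \<in> Pref (tr n u m)"
  then obtain i where "i < m - 1" "\<sigma> = take (Suc i) (tr n u m)" unfolding Pref_def by auto
  then show "\<exists>k. 1 \<le> k \<and> k < m \<and> \<sigma> = tr n u k"
    by (intro exI[of _ "Suc i"]) (auto simp: take_tr)
next
  assume "\<exists>k. 1 \<le> k \<and> k < m \<and> \<sigma> = tr n u k"
  then obtain k where "1 \<le> k" "k < m" "\<sigma> = tr n u k" by blast
  then have "\<sigma> = take (Suc (k - 1)) (tr n u m) \<and> k - 1 < length (tr n u m) - 1"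
    by (auto simp: take_tr)
  then show "\<sigma> \<in> Pref (tr n u m)" unfolding Pref_def by blast
qed

lemma Suff_tr: "\<sigma> \<in> Suff (tr n u m) \<longleftrightarrow> (\<exists>c. 1 \<le> c \<and> c < m \<and> \<sigma> = tr n (u + int c) (m - c))"
proof
  assume "\<sigma> \<in> Suff (tr n u m)"
  then obtain i where "1 \<le> i" "i < m" "\<sigma> = drop i (tr n u m)" unfolding Suff_def by auto
  then show "\<exists>c. 1 \<le> c \<and> c < m \<and> \<sigma> = tr n (u + int c) (m - c)"
    by (intro exI[of _ i]) (auto simp: drop_tr)
next
  assume "\<exists>c. 1 \<le> c \<and> c < m \<and> \<sigma> = tr n (u + int c) (m - c)"
  then obtain c where "1 \<le> c" "c < m" "\<sigma> = tr n (u + int c) (m - c)" by blast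
  then have "\<sigma> = drop c (tr n u m) \<and> 1 \<le> c \<and> c < length (tr n u m)"
    by (auto simp: drop_tr)
  then show "\<sigma> \<in> Suff (tr n u m)" unfolding Suff_def by blast
qed

lemma Xf_nonneg: "Xf n u m \<ge> 0"
  unfolding Xf_def Yf_def by auto

lemma FT_suffix:
  assumes "1 \<le> c" "c < m"
  shows "int c < Xf n u m \<Longrightarrow> Xf n (u + int c) (m - c) = Xf n u m - int c \<and> Yf n (u + int c) (m - c) = Yf n u m \<and> Ef n (u + int c) (m - c) = Ef n u m"
    and "int c \<ge> Xf n u m \<Longrightarrow> Xf n (u + int c) (m - c) = 0 \<and> Yf n (u + int c) (m - c) = Yf n u m - (int c - Xf n u m) \<and> Ef n (u + int c) (m - c) = 0"
  using assms unfolding Xf_def Yf_def Ef_def by (auto simp: of_nat_diff)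

lemma FT_prefix:
  assumes "1 \<le> k" "k < m"
  shows "int k > Xf n u m \<Longrightarrow> Xf n u k = Xf n u m \<and> Yf n u k = int k - Xf n u m \<and> Ef n u k = 0"
    and "int k \<le> Xf n u m \<Longrightarrow> Xf n u k = int k \<and> Yf n u k = 0 \<and> Ef n u k = min (2 * int n) (Ef n u m + Xf n u m - int k)"
  using assms unfolding Xf_def Yf_def Ef_def stt_def by (auto simp: of_nat_diff)

lemma FT_ext:
  assumes "m < m1" "1 \<le> m"
  shows "Yf n u m \<ge> 1 \<Longrightarrow> Xf n u m1 = Xf n u m \<and> Yf n u m1 = Yf n u m + int m1 - int m \<and> Ef n u m1 = 0"
    and "Yf n u m = 0 \<Longrightarrow> u + int m1 - 1 \<le> 2 * int n \<Longrightarrow> Xf n u m1 = Xf n u m + int m1 - int m \<and> Yf n u m1 = 0 \<and> Ef n u m1 = 2 * int n - max (u + int m1 - 1) 0"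
    and "Yf n u m = 0 \<Longrightarrow> u + int m1 - 1 > 2 * int n \<Longrightarrow> Xf n u m1 = Xf n u m + 2 * int n - (u + int m - 1) \<and> Yf n u m1 = u + int m1 - 1 - 2 * int n \<and> Ef n u m1 = 0"
    and "Yf n u m = 0 \<Longrightarrow> Ef n u m = 2 * int n - max (u + int m - 1) 0"
  using assms unfolding Xf_def Yf_def Ef_def stt_def by auto

lemma FT_left:
  assumes "1 \<le> c" "c < m1" "Xf n (u1 + int c) (m1 - c) \<ge> 1"
  shows "Xf n u1 m1 = Xf n (u1 + int c) (m1 - c) + int c \<and> Yf n u1 m1 = Yf n (u1 + int c) (m1 - c) \<and> Ef n u1 m1 = Ef n (u1 + int c) (m1 - c)"
  using assms unfolding Xf_def Yf_def Ef_def stt_def by (auto simp: of_nat_diff)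

lemma XY_sum: "Xf n u m + Yf n u m = int m"
  by (simp add: Xf_def)

lemma Yf_nonneg: "Yf n u m \<ge> 0"
  by (simp add: Yf_def)

lemma Ef_bounds: "1 \<le> m \<Longrightarrow> 0 \<le> Ef n u m \<and> Ef n u m \<le> 2 * int n"
  unfolding Ef_def Yf_def stt_def by auto

definition Cf :: "nat \<Rightarrow> nat \<Rightarrow> int \<Rightarrow> nat \<Rightarrow> int \<Rightarrow> nat \<Rightarrow> bool" where
  "Cf n k u m u' m' \<longleftrightarrow> Yf n u m = Yf n u' m' \<and> min (Xf n u m) (int k) = min (Xf n u' m') (int k)
     \<and> min (Ef n u m) (int k) = min (Ef n u' m') (int k)"

definition Q :: "nat \<Rightarrow> nat \<Rightarrow> nat list \<Rightarrow> nat list \<Rightarrow> bool" where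
  "Q n k \<rho> \<rho>' \<longleftrightarrow> (\<exists>u m u' m'. 1 \<le> m \<and> 1 \<le> m' \<and> \<rho> = tr n u m \<and> \<rho>' = tr n u' m' \<and> Cf n k u m u' m')"

lemma QI: "1 \<le> m \<Longrightarrow> 1 \<le> m' \<Longrightarrow> Cf n j u m u' m' \<Longrightarrow> Q n j (tr n u m) (tr n u' m')"
  unfolding Q_def by blast

lemma Q_sym: "Q n k \<rho> \<rho>' \<Longrightarrow> Q n k \<rho>' \<rho>"
  unfolding Q_def Cf_def by metis

lemma min_mono_eq: "min (a::int) k = min b k \<Longrightarrow> j \<le> k \<Longrightarrow> min a j = min b j"
  by (simp add: min_def split: if_splits)

lemma Q_mono: "Q n k \<rho> \<rho>' \<Longrightarrow> j \<le> k \<Longrightarrow> Q n j \<rho> \<rho>'"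
proof -
  assume "Q n k \<rho> \<rho>'" "j \<le> k"
  then show ?thesis unfolding Q_def Cf_def
    by (metis min_mono_eq of_nat_mono)
qed

lemma sat_Prop_tr: "1 \<le> m \<Longrightarrow> sat (Kn n) (tr n u m) Prop \<longleftrightarrow> Xf n u m = 0"
proof -
  assume m: "1 \<le> m"
  have "sat (Kn n) (tr n u m) Prop \<longleftrightarrow> (\<forall>i<m. nat (stt n (u + int i)) = 2*n+1)"
    by (auto simp: Kn_def mun_def tr_def)
  also have "\<dots> \<longleftrightarrow> u \<ge> 2 * int n + 1"
  proof
    assume "\<forall>i<m. nat (stt n (u + int i)) = 2*n+1"
    then have "nat (stt n u) = 2*n+1" using m by (metis add.right_neutral of_nat_0 less_le_trans zero_less_one)
    then show "u \<ge> 2 * int n + 1" by (auto simp: stt_def)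
  qed (auto simp: stt_def)
  also have "\<dots> \<longleftrightarrow> Xf n u m = 0" using m unfolding Xf_def Yf_def by auto
  finally show ?thesis .
qed

lemma move_E:
  assumes "Q n k \<rho> \<rho>'" "1 \<le> j" "j < k" "\<sigma> \<in> Suff \<rho>"
  shows "\<exists>\<sigma>'\<in>Suff \<rho>'. Q n j \<sigma> \<sigma>'"
proof -
  obtain u m u' m' where m: "1 \<le> m" "1 \<le> m'" and r: "\<rho> = tr n u m" "\<rho>' = tr n u' m'"
    and C: "Cf n k u m u' m'" using assms(1) unfolding Q_def by blast
  obtain c where c: "1 \<le> c" "c < m" and s: "\<sigma> = tr n (u + int c) (m - c)"
    using assms(4) r by (auto simp: Suff_tr)
  define x where "x = Xf n u m"
  define x' where "x' = Xf n u' m'"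
  define ci :: int where "ci = (if int c \<ge> x then x' + (int c - x) else if x = x' then int c
      else if x - int c < int j then x' - (x - int c) else x' - int j)"
  define c' where "c' = nat ci"
  have XY: "x + Yf n u m = int m" "x' + Yf n u' m' = int m'" "Yf n u m \<ge> 0" "x \<ge> 0" "x' \<ge> 0"
    using XY_sum[of n u m] XY_sum[of n u' m'] Yf_nonneg[of n u m] Xf_nonneg[of n u m] Xf_nonneg[of n u' m']
    unfolding x_def x'_def by auto
  have C': "Yf n u m = Yf n u' m'" "min x (int k) = min x' (int k)" "min (Ef n u m) (int k) = min (Ef n u' m') (int k)"
    using C unfolding Cf_def x_def x'_def by auto
  have ci: "1 \<le> ci" "ci < int m'"
    using XY C' c assms(2,3) unfolding ci_def by (auto simp: min_def split: if_splits)
  then have c': "1 \<le> c'" "c' < m'" "int c' = ci" unfolding c'_def by auto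
  note S1 = FT_suffix(1)[OF c, of n u, folded x_def] FT_suffix(2)[OF c, of n u, folded x_def]
  note S2 = FT_suffix(1)[OF c'(1,2), of n u', folded x'_def] FT_suffix(2)[OF c'(1,2), of n u', folded x'_def]
  have "Cf n j (u + int c) (m - c) (u' + int c') (m' - c')"
  proof -
    have I: "int j < int k" "1 \<le> int j" "1 \<le> int c" "int c < int m" using c assms(2,3) by auto
    show ?thesis using S1 S2 c'(3) XY C' I unfolding ci_def Cf_def
    by (smt (verit) min_def)
  qed
  moreover have "tr n (u' + int c') (m' - c') \<in> Suff \<rho>'" using r c' by (auto simp: Suff_tr)
  moreover have "Q n j \<sigma> (tr n (u' + int c') (m' - c'))"
    unfolding Q_def using s c c' calculation(1)
    by (intro exI[of _ "u + int c"] exI[of _ "m - c"] exI[of _ "u' + int c'"] exI[of _ "m' - c'"]) auto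
  ultimately show ?thesis by blast
qed

lemma Ef_Y: "Yf n u m \<noteq> 0 \<Longrightarrow> Ef n u m = 0"
  by (simp add: Ef_def)

lemma move_B:
  assumes "Q n k \<rho> \<rho>'" "1 \<le> j" "2 * j + 2 \<le> k" "j \<le> 2 * n" "\<sigma> \<in> Pref \<rho>"
  shows "\<exists>\<sigma>'\<in>Pref \<rho>'. Q n j \<sigma> \<sigma>'"
proof -
  obtain u m u' m' where m: "1 \<le> m" "1 \<le> m'" and r: "\<rho> = tr n u m" "\<rho>' = tr n u' m'"
    and C: "Cf n k u m u' m'" using assms(1) unfolding Q_def by blast
  obtain k1 where k1: "1 \<le> k1" "k1 < m" and s: "\<sigma> = tr n u k1"
    using assms(5) r by (auto simp: Pref_tr)
  define x where "x = Xf n u m"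
  define x' where "x' = Xf n u' m'"
  define e where "e = Ef n u m"
  define e' where "e' = Ef n u' m'"
  define ki :: int where "ki = (if int k1 > x then x' + (int k1 - x) else if int k1 < int j then int k1
      else if e + (x - int k1) \<ge> int j then int j else x' - (x - int k1))"
  define k3 where "k3 = nat ki"
  have XY: "x + Yf n u m = int m" "x' + Yf n u' m' = int m'" "Yf n u m \<ge> 0" "x \<ge> 0" "x' \<ge> 0"
    using XY_sum[of n u m] XY_sum[of n u' m'] Yf_nonneg[of n u m] Xf_nonneg[of n u m] Xf_nonneg[of n u' m']
    unfolding x_def x'_def by auto
  have EB: "0 \<le> e" "e \<le> 2 * int n" "0 \<le> e'" "e' \<le> 2 * int n"
    "Yf n u m \<noteq> 0 \<Longrightarrow> e = 0" "Yf n u' m' \<noteq> 0 \<Longrightarrow> e' = 0"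
    using Ef_bounds[OF m(1), of n u] Ef_bounds[OF m(2), of n u'] Ef_Y[of n u m] Ef_Y[of n u' m']
    unfolding e_def e'_def by auto
  have C': "Yf n u m = Yf n u' m'" "min x (int k) = min x' (int k)" "min e (int k) = min e' (int k)"
    using C unfolding Cf_def x_def x'_def e_def e'_def by auto
  have I: "2 * int j + 2 \<le> int k" "1 \<le> int j" "1 \<le> int k1" "int k1 < int m" "int j \<le> 2 * int n"
    using k1 assms(2,3,4) by auto
  have ki1: "1 \<le> ki"
    using XY C' EB I unfolding ki_def by (smt (verit) min_def)
  have ki2: "ki < int m'"
    using XY C' EB I unfolding ki_def by (smt (verit) min_def)
  note ki = ki1 ki2
  then have k3: "1 \<le> k3" "k3 < m'" "int k3 = ki" unfolding k3_def by auto
  note S1 = FT_prefix(1)[OF k1, of n u, folded x_def e_def] FT_prefix(2)[OF k1, of n u, folded x_def e_def]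
  note S2 = FT_prefix(1)[OF k3(1,2), of n u', folded x'_def e'_def] FT_prefix(2)[OF k3(1,2), of n u', folded x'_def e'_def]
  have "Cf n j u k1 u' k3"
  proof -
    show ?thesis using S1 S2 k3(3) XY C' I EB unfolding ki_def Cf_def
    by (smt (verit) min_def)
  qed
  moreover have "tr n u' k3 \<in> Pref \<rho>'" using r k3 by (auto simp: Pref_tr)
  moreover have "Q n j \<sigma> (tr n u' k3)"
    unfolding Q_def using s k1 k3 calculation(1)
    by (intro exI[of _ u] exI[of _ k1] exI[of _ u'] exI[of _ k3]) auto
  ultimately show ?thesis by blast
qed

lemma endpt:
  assumes "1 \<le> m"
  shows "Yf n u m = 0 \<Longrightarrow> u + int m - 1 \<le> 2*int n \<and> Ef n u m = 2*int n - max (u + int m - 1) 0"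
    and "Yf n u m \<ge> 1 \<Longrightarrow> Xf n u m \<ge> 1 \<Longrightarrow> u + int m - 1 = 2 * int n + Yf n u m \<and> u \<le> 2 * int n"
    and "Xf n u m = 0 \<Longrightarrow> u \<ge> 2 * int n + 1 \<and> Yf n u m = int m"
  using assms unfolding Xf_def Yf_def Ef_def stt_def by auto

lemma Pref_trace:
  assumes "is_trace (Kn n) \<sigma>" "\<rho> \<in> Pref \<sigma>" "length \<rho> = m"
  obtains u1 m1 where "\<sigma> = tr n u1 m1" "m < m1" "\<rho> = tr n u1 m" "1 \<le> m"
proof -
  obtain u1 m1 where "1 \<le> m1" "\<sigma> = tr n u1 m1" using assms(1) trace_iff by blast
  moreover then obtain k where "1 \<le> k" "k < m1" "\<rho> = tr n u1 k" using assms(2) by (auto simp: Pref_tr)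
  ultimately show ?thesis using that assms(3) by auto
qed

lemma move_Bbar:
  assumes "Q n k \<rho> \<rho>'" "1 \<le> j" "2 * j + 2 \<le> k" "j \<le> 2 * n" "is_trace (Kn n) \<sigma>" "\<rho> \<in> Pref \<sigma>"
  shows "\<exists>\<sigma>'. is_trace (Kn n) \<sigma>' \<and> \<rho>' \<in> Pref \<sigma>' \<and> Q n j \<sigma> \<sigma>'"
proof -
  obtain u m u' m' where m: "1 \<le> m" "1 \<le> m'" and r: "\<rho> = tr n u m" "\<rho>' = tr n u' m'"
    and C: "Cf n k u m u' m'" using assms(1) unfolding Q_def by blast
  obtain u1 m1 where s: "\<sigma> = tr n u1 m1" and mm1: "m < m1" and r1: "\<rho> = tr n u1 m"
  proof -
    have "length \<rho> = m" using r by simp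
    from Pref_trace[OF assms(5,6) this] show ?thesis using that by blast
  qed
  have fi: "Yf n u1 m = Yf n u m" "Xf n u1 m = Xf n u m" "Ef n u1 m = Ef n u m"
    using feat_inv[of n u1 m u] r r1 m by auto
  define x where "x = Xf n u m"
  define x' where "x' = Xf n u' m'"
  define e where "e = Ef n u m"
  define e' where "e' = Ef n u' m'"
  define y where "y = Yf n u m"
  define v1 where "v1 = u1 + int m - 1"
  define v' where "v' = u' + int m' - 1"
  define c where "c = int m1 - int m"
  define Xs where "Xs = Xf n u1 m1"
  define Ys where "Ys = Yf n u1 m1"
  define Es where "Es = Ef n u1 m1"
  have XY: "x + y = int m" "x' + y = int m'" "y \<ge> 0" "x \<ge> 0" "x' \<ge> 0"
    using XY_sum[of n u m] XY_sum[of n u' m'] Yf_nonneg[of n u m] Xf_nonneg[of n u m] Xf_nonneg[of n u' m'] C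
    unfolding x_def x'_def y_def Cf_def by auto
  have EB: "0 \<le> e" "e \<le> 2 * int n" "0 \<le> e'" "e' \<le> 2 * int n"
    "y \<noteq> 0 \<Longrightarrow> e = 0" "y \<noteq> 0 \<Longrightarrow> e' = 0"
    using Ef_bounds[OF m(1), of n u] Ef_bounds[OF m(2), of n u'] Ef_Y[of n u m] Ef_Y[of n u' m'] C
    unfolding e_def e'_def y_def Cf_def by auto
  have C': "min x (int k) = min x' (int k)" "min e (int k) = min e' (int k)"
    using C unfolding Cf_def x_def x'_def e_def e'_def by auto
  have I: "2 * int j + 2 \<le> int k" "1 \<le> int j" "int j \<le> 2 * int n" "1 \<le> c"
    using assms(2,3,4) mm1 unfolding c_def by auto
  have E1: "y = 0 \<Longrightarrow> v1 \<le> 2*int n \<and> e = 2*int n - max v1 0"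
     "y \<ge> 1 \<Longrightarrow> x \<ge> 1 \<Longrightarrow> v1 = 2 * int n + y \<and> u1 \<le> 2 * int n"
     "x = 0 \<Longrightarrow> u1 \<ge> 2 * int n + 1 \<and> y = int m"
    using endpt[OF m(1), of n u1] fi unfolding x_def y_def e_def v1_def by auto
  have E2: "y = 0 \<Longrightarrow> v' \<le> 2*int n \<and> e' = 2*int n - max v' 0"
     "y \<ge> 1 \<Longrightarrow> x' \<ge> 1 \<Longrightarrow> v' = 2 * int n + y \<and> u' \<le> 2 * int n"
     "x' = 0 \<Longrightarrow> u' \<ge> 2 * int n + 1 \<and> y = int m'"
    using endpt[OF m(2), of n u'] C unfolding x'_def y_def e'_def v'_def Cf_def by auto
  have SP: "y \<ge> 1 \<Longrightarrow> Xs = x \<and> Ys = y + c \<and> Es = 0"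
    "y = 0 \<Longrightarrow> v1 + c \<le> 2 * int n \<Longrightarrow> Xs = x + c \<and> Ys = 0 \<and> Es = 2 * int n - max (v1 + c) 0"
    "y = 0 \<Longrightarrow> v1 + c > 2 * int n \<Longrightarrow> Xs = x + 2 * int n - v1 \<and> Ys = v1 + c - 2 * int n \<and> Es = 0"
    using FT_ext(1-3)[OF mm1 m(1), of n u1] fi
    unfolding Xs_def Ys_def Es_def x_def y_def v1_def c_def by (auto simp: algebra_simps)
  define v3 where "v3 = (if e = e' then v1 else max v' 0)"
  define u3 where "u3 = v3 - int m' + 1"
  define ci where "ci = (if e = e' then c else if Ys \<ge> 1 then e' + Ys else if Es \<ge> int j then
       (if Xs < int j then c else int j) else e' - Es)"
  define c3 where "c3 = nat ci"
  define m3 where "m3 = m' + c3"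
  have ci1: "1 \<le> ci"
    using XY EB C' I E1 E2 SP unfolding ci_def by (smt (verit) min_def)
  have sh: "u3 = u' \<or> (u3 + int m' \<le> 1 \<and> u' + int m' \<le> 1) \<or> (u3 \<ge> 2 * int n + 1 \<and> u' \<ge> 2 * int n + 1)"
    using XY EB C' I E1 E2 unfolding u3_def v3_def v1_def v'_def by (smt (verit) min_def)
  then have r3: "tr n u3 m' = \<rho>'" using r tr_shift by metis
  have fi3: "Yf n u3 m' = y" "Xf n u3 m' = x'" "Ef n u3 m' = e'"
    using feat_inv[of n u3 m' u'] r3 r m C unfolding y_def x'_def e'_def Cf_def by auto
  have mm3: "m' < m3" "int m3 = int m' + ci" using ci1 unfolding m3_def c3_def by auto
  have SD: "y \<ge> 1 \<Longrightarrow> Xf n u3 m3 = x' \<and> Yf n u3 m3 = y + ci \<and> Ef n u3 m3 = 0"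
    "y = 0 \<Longrightarrow> v3 + ci \<le> 2 * int n \<Longrightarrow> Xf n u3 m3 = x' + ci \<and> Yf n u3 m3 = 0 \<and> Ef n u3 m3 = 2 * int n - max (v3 + ci) 0"
    "y = 0 \<Longrightarrow> v3 + ci > 2 * int n \<Longrightarrow> Xf n u3 m3 = x' + 2 * int n - v3 \<and> Yf n u3 m3 = v3 + ci - 2 * int n \<and> Ef n u3 m3 = 0"
    using FT_ext(1-3)[OF mm3(1) m(2), of n u3] fi3 mm3(2)
    unfolding u3_def by (auto simp: algebra_simps)
  have "Cf n j u1 m1 u3 m3"
  proof -
    show ?thesis using XY EB C' I E1 E2 SP SD unfolding ci_def v3_def Cf_def Xs_def Ys_def Es_def
      by (smt (verit) min_def)
  qed
  moreover have "is_trace (Kn n) (tr n u3 m3)" unfolding trace_iff using mm3(1)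
    by (intro exI[of _ u3] exI[of _ m3]) auto
  moreover have "\<rho>' \<in> Pref (tr n u3 m3)" using r3 mm3 m by (auto simp: Pref_tr)
  moreover have "Q n j \<sigma> (tr n u3 m3)"
    unfolding Q_def using s mm1 mm3 m calculation(1)
    by (intro exI[of _ u1] exI[of _ m1] exI[of _ u3] exI[of _ m3]) auto
  ultimately show ?thesis by blast
qed

lemma move_Ebar:
  assumes "Q n k \<rho> \<rho>'" "1 \<le> j" "j < k" "is_trace (Kn n) \<sigma>" "\<rho> \<in> Suff \<sigma>"
  shows "\<exists>\<sigma>'. is_trace (Kn n) \<sigma>' \<and> \<rho>' \<in> Suff \<sigma>' \<and> Q n j \<sigma> \<sigma>'"
proof -
  obtain u m u' m' where m: "1 \<le> m" "1 \<le> m'" and r: "\<rho> = tr n u m" "\<rho>' = tr n u' m'"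
    and C: "Cf n k u m u' m'" using assms(1) unfolding Q_def by blast
  obtain u1 m1 where m1: "1 \<le> m1" and s: "\<sigma> = tr n u1 m1" using assms(4) trace_iff by blast
  obtain c where c: "1 \<le> c" "c < m1" and r1: "\<rho> = tr n (u1 + int c) (m1 - c)"
    using assms(5) s by (auto simp: Suff_tr)
  have mc: "m1 - c = m" using r r1 by (metis length_tr)
  have C': "Yf n u m = Yf n u' m'" "min (Xf n u m) (int k) = min (Xf n u' m') (int k)"
    "min (Ef n u m) (int k) = min (Ef n u' m') (int k)"
    using C unfolding Cf_def by auto
  have jk: "int j \<le> int k" "1 \<le> int j" using assms(2,3) by auto
  show ?thesis
  proof (cases "Xf n u m = 0")
    case True
    then have x': "Xf n u' m' = 0" using C' jk Xf_nonneg[of n u' m'] by (auto simp: min_def split: if_splits)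
    have "u \<ge> 2 * int n + 1" "Yf n u m = int m" using endpt(3)[OF m(1) True] by auto
    moreover have "u' \<ge> 2 * int n + 1" "Yf n u' m' = int m'" using endpt(3)[OF m(2) x'] by auto
    ultimately have "m = m'" using C' by simp
    then have "\<rho>' = \<rho>" using r tr_shift \<open>u \<ge> _\<close> \<open>u' \<ge> _\<close> by metis
    moreover have "Q n j \<sigma> \<sigma>" unfolding Q_def Cf_def using s m1 by blast
    ultimately show ?thesis using assms(4,5) by blast
  next
    case False
    then have x1: "Xf n u m \<ge> 1" using Xf_nonneg[of n u m] by simp
    then have x1': "Xf n u' m' \<ge> 1" using C' jk Xf_nonneg[of n u' m'] by (auto simp: min_def split: if_splits)
    have fi: "Yf n (u1 + int c) m = Yf n u m" "Xf n (u1 + int c) m = Xf n u m" "Ef n (u1 + int c) m = Ef n u m"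
      using feat_inv[of n "u1 + int c" m u] r r1 mc m by auto
    have F1: "Xf n u1 m1 = Xf n u m + int c \<and> Yf n u1 m1 = Yf n u m \<and> Ef n u1 m1 = Ef n u m"
      using FT_left[OF c, of n u1] fi x1 mc by simp
    have c2: "c < m' + c" using m by simp
    have F2: "Xf n (u' - int c) (m' + c) = Xf n u' m' + int c \<and> Yf n (u' - int c) (m' + c) = Yf n u' m'
       \<and> Ef n (u' - int c) (m' + c) = Ef n u' m'"
      using FT_left[OF c(1) c2, of n "u' - int c"] x1' by simp
    have "Cf n j u1 m1 (u' - int c) (m' + c)"
    proof -
      have "int c \<ge> 1" using c by simp
      then show ?thesis unfolding Cf_def using F1 F2 C' jk by (smt (verit) min_def)
    qed
    moreover have "is_trace (Kn n) (tr n (u' - int c) (m' + c))" unfolding trace_iff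
      using m by (intro exI[of _ "u' - int c"] exI[of _ "m' + c"]) auto
    moreover have "\<rho>' \<in> Suff (tr n (u' - int c) (m' + c))" unfolding Suff_tr using r c m
      by (intro exI[of _ c]) auto
    moreover have "Q n j \<sigma> (tr n (u' - int c) (m' + c))"
      unfolding s by (rule QI[OF m1 _ calculation(1)]) (use m in auto)
    ultimately show ?thesis by blast
  qed
qed

lemma hs_size_pos: "1 \<le> hs_size f"
  by (cases f) auto

lemma game:
  "balanced \<phi> \<Longrightarrow> hs_size \<phi> \<le> k \<Longrightarrow> k \<le> 2 * n \<Longrightarrow> Q n k \<rho> \<rho>' \<Longrightarrow>
    sat (Kn n) \<rho> \<phi> = sat (Kn n) \<rho>' \<phi>"
proof (induction "hs_size \<phi>" arbitrary: \<phi> k \<rho> \<rho>' rule: less_induct)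
  case less
  note IH = less.hyps
  show ?case
  proof (cases \<phi>)
    case Prop
    obtain u m u' m' where m: "1 \<le> m" "1 \<le> m'" and r: "\<rho> = tr n u m" "\<rho>' = tr n u' m'"
      and C: "Cf n k u m u' m'" using less.prems(4) unfolding Q_def by blast
    have "1 \<le> int k" using less.prems(2) Prop by simp
    then have "Xf n u m = 0 \<longleftrightarrow> Xf n u' m' = 0"
      using C Xf_nonneg[of n u m] Xf_nonneg[of n u' m'] unfolding Cf_def by (auto simp: min_def split: if_splits)
    then show ?thesis using Prop r sat_Prop_tr m by simp
  next
    case (Neg f)
    then show ?thesis using IH[of f k \<rho> \<rho>'] less.prems by simp
  next
    case (Conj f g)
    then show ?thesis using IH[of f k \<rho> \<rho>'] IH[of g k \<rho> \<rho>'] less.prems by simp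
  next
    case (DiaB f)
    then obtain a b where f: "f = Conj a b" "hs_size a = hs_size b" "balanced a" "balanced b"
      using less.prems(1) by auto
    define j where "j = hs_size a"
    have j: "1 \<le> j" "2 * j + 2 \<le> k" "j \<le> 2 * n" "hs_size a < hs_size \<phi>" "hs_size b < hs_size \<phi>"
      using hs_size_pos[of a] less.prems(2,3) DiaB f unfolding j_def by auto
    have one: "sat (Kn n) \<rho>2 \<phi> \<Longrightarrow> sat (Kn n) \<rho>2' \<phi>" if Q2: "Q n k \<rho>2 \<rho>2'" for \<rho>2 \<rho>2'
    proof -
      assume "sat (Kn n) \<rho>2 \<phi>"
      then obtain \<sigma> where \<sigma>: "\<sigma> \<in> Pref \<rho>2" "sat (Kn n) \<sigma> a" "sat (Kn n) \<sigma> b" using DiaB f by auto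
      obtain \<sigma>' where \<sigma>': "\<sigma>' \<in> Pref \<rho>2'" "Q n j \<sigma> \<sigma>'" using move_B[OF Q2 j(1,2,3) \<sigma>(1)] by blast
      have "sat (Kn n) \<sigma>' a" "sat (Kn n) \<sigma>' b"
        using IH[OF j(4) f(3), of j \<sigma> \<sigma>'] IH[OF j(5) f(4), of j \<sigma> \<sigma>'] \<sigma> \<sigma>' j f(2) unfolding j_def by auto
      then show ?thesis using \<sigma>' DiaB f by auto
    qed
    show ?thesis using one[OF less.prems(4)] one[OF Q_sym[OF less.prems(4)]] by blast
  next
    case (DiaBbar f)
    then obtain a b where f: "f = Conj a b" "hs_size a = hs_size b" "balanced a" "balanced b"
      using less.prems(1) by auto
    define j where "j = hs_size a"
    have j: "1 \<le> j" "2 * j + 2 \<le> k" "j \<le> 2 * n" "hs_size a < hs_size \<phi>" "hs_size b < hs_size \<phi>"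
      using hs_size_pos[of a] less.prems(2,3) DiaBbar f unfolding j_def by auto
    have one: "sat (Kn n) \<rho>2 \<phi> \<Longrightarrow> sat (Kn n) \<rho>2' \<phi>" if Q2: "Q n k \<rho>2 \<rho>2'" for \<rho>2 \<rho>2'
    proof -
      assume "sat (Kn n) \<rho>2 \<phi>"
      then obtain \<sigma> where \<sigma>: "is_trace (Kn n) \<sigma>" "\<rho>2 \<in> Pref \<sigma>" "sat (Kn n) \<sigma> a" "sat (Kn n) \<sigma> b"
        using DiaBbar f by auto
      obtain \<sigma>' where \<sigma>': "is_trace (Kn n) \<sigma>'" "\<rho>2' \<in> Pref \<sigma>'" "Q n j \<sigma> \<sigma>'"
        using move_Bbar[OF Q2 j(1,2,3) \<sigma>(1,2)] by blast
      have "sat (Kn n) \<sigma>' a" "sat (Kn n) \<sigma>' b"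
        using IH[OF j(4) f(3), of j \<sigma> \<sigma>'] IH[OF j(5) f(4), of j \<sigma> \<sigma>'] \<sigma> \<sigma>' j f(2) unfolding j_def by auto
      then show ?thesis using \<sigma>' DiaBbar f by auto
    qed
    show ?thesis using one[OF less.prems(4)] one[OF Q_sym[OF less.prems(4)]] by blast
  next
    case (DiaE f)
    define j where "j = hs_size f"
    have j: "1 \<le> j" "j < k" "hs_size f < hs_size \<phi>" "balanced f"
      using hs_size_pos[of f] less.prems(1,2) DiaE unfolding j_def by auto
    have one: "sat (Kn n) \<rho>2 \<phi> \<Longrightarrow> sat (Kn n) \<rho>2' \<phi>" if Q2: "Q n k \<rho>2 \<rho>2'" for \<rho>2 \<rho>2'
    proof -
      assume "sat (Kn n) \<rho>2 \<phi>"
      then obtain \<sigma> where \<sigma>: "\<sigma> \<in> Suff \<rho>2" "sat (Kn n) \<sigma> f" using DiaE by auto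
      obtain \<sigma>' where \<sigma>': "\<sigma>' \<in> Suff \<rho>2'" "Q n j \<sigma> \<sigma>'" using move_E[OF Q2 j(1,2) \<sigma>(1)] by blast
      have "sat (Kn n) \<sigma>' f"
        using IH[OF j(3) j(4), of j \<sigma> \<sigma>'] \<sigma> \<sigma>' j less.prems(3) unfolding j_def by auto
      then show ?thesis using \<sigma>' DiaE by auto
    qed
    show ?thesis using one[OF less.prems(4)] one[OF Q_sym[OF less.prems(4)]] by blast
  next
    case (DiaEbar f)
    define j where "j = hs_size f"
    have j: "1 \<le> j" "j < k" "hs_size f < hs_size \<phi>" "balanced f"
      using hs_size_pos[of f] less.prems(1,2) DiaEbar unfolding j_def by auto
    have one: "sat (Kn n) \<rho>2 \<phi> \<Longrightarrow> sat (Kn n) \<rho>2' \<phi>" if Q2: "Q n k \<rho>2 \<rho>2'" for \<rho>2 \<rho>2'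
    proof -
      assume "sat (Kn n) \<rho>2 \<phi>"
      then obtain \<sigma> where \<sigma>: "is_trace (Kn n) \<sigma>" "\<rho>2 \<in> Suff \<sigma>" "sat (Kn n) \<sigma> f" using DiaEbar by auto
      obtain \<sigma>' where \<sigma>': "is_trace (Kn n) \<sigma>'" "\<rho>2' \<in> Suff \<sigma>'" "Q n j \<sigma> \<sigma>'"
        using move_Ebar[OF Q2 j(1,2) \<sigma>(1,2)] by blast
      have "sat (Kn n) \<sigma>' f"
        using IH[OF j(3) j(4), of j \<sigma> \<sigma>'] \<sigma> \<sigma>' j less.prems(3) unfolding j_def by auto
      then show ?thesis using \<sigma>' DiaEbar by auto
    qed
    show ?thesis using one[OF less.prems(4)] one[OF Q_sym[OF less.prems(4)]] by blast
  qed
qed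

lemma trace_M: "is_trace (Mn n) = is_trace (Kn n)"
  unfolding is_trace_def[abs_def] Kn_def Mn_def by simp

lemma sat_M: "sat (Mn n) \<rho> \<phi> = sat (Kn n) \<rho> \<phi>"
proof -
  have L: "lab (Mn n) = lab (Kn n)" by (simp add: Kn_def Mn_def)
  show ?thesis by (induction \<phi> arbitrary: \<rho>) (simp_all add: trace_M L)
qed

lemma hd_tr: "1 \<le> m \<Longrightarrow> hd (tr n u m) = nat (stt n u)"
proof -
  assume "1 \<le> m"
  then have "tr n u m = nat (stt n u) # tr n (u + 1) (m - 1)"
    by (cases m) (auto simp: tr_def upt_conv_Cons map_Suc_upt[symmetric] o_def algebra_simps simp del: upt_Suc)
  then show ?thesis by simp
qed

lemma stt0: "stt n u \<le> 0 \<longleftrightarrow> u \<le> 0" unfolding stt_def by auto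
lemma stt1: "1 \<le> n \<Longrightarrow> nat (stt n u) = 1 \<longleftrightarrow> u = 1" unfolding stt_def by auto

lemma initK: "is_init_trace (Kn n) \<rho> \<longleftrightarrow> (\<exists>u m. 1 \<le> m \<and> \<rho> = tr n u m \<and> u \<le> 0)"
proof
  assume "is_init_trace (Kn n) \<rho>"
  then obtain u m where "1 \<le> m" "\<rho> = tr n u m" "hd \<rho> = init (Kn n)"
    unfolding is_init_trace_def trace_iff by blast
  then show "\<exists>u m. 1 \<le> m \<and> \<rho> = tr n u m \<and> u \<le> 0" by (auto simp: hd_tr Kn_def stt0)
next
  assume "\<exists>u m. 1 \<le> m \<and> \<rho> = tr n u m \<and> u \<le> 0"
  then obtain u m where "1 \<le> m" "\<rho> = tr n u m" "u \<le> 0" by blast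
  moreover then have "hd \<rho> = init (Kn n)" by (auto simp: hd_tr Kn_def stt0)
  ultimately show "is_init_trace (Kn n) \<rho>" unfolding is_init_trace_def trace_iff by blast
qed

lemma initM: "1 \<le> n \<Longrightarrow> is_init_trace (Mn n) \<rho> \<longleftrightarrow> (\<exists>m. 1 \<le> m \<and> \<rho> = tr n 1 m)"
proof
  assume n: "1 \<le> n" and "is_init_trace (Mn n) \<rho>"
  then obtain u m where "1 \<le> m" "\<rho> = tr n u m" "hd \<rho> = init (Mn n)"
    unfolding is_init_trace_def trace_M trace_iff by blast
  moreover then have "u = 1" using stt1[OF n, of u] by (simp add: hd_tr Mn_def)
  ultimately show "\<exists>m. 1 \<le> m \<and> \<rho> = tr n 1 m" by blast
next
  assume n: "1 \<le> n" and "\<exists>m. 1 \<le> m \<and> \<rho> = tr n 1 m"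
  then obtain m where "1 \<le> m" "\<rho> = tr n 1 m" by blast
  moreover then have "hd \<rho> = init (Mn n)" using stt1[OF n, of 1] by (simp add: hd_tr Mn_def)
  ultimately show "is_init_trace (Mn n) \<rho>" unfolding is_init_trace_def trace_M trace_iff by blast
qed

lemma match_KM:
  assumes "1 \<le> n" "1 \<le> m" "u \<le> 0"
  shows "\<exists>m'. 1 \<le> m' \<and> Cf n n u m 1 m'"
proof -
  define v where "v = u + int m - 1"
  have T: "Yf n u m = max 0 (v + 1 - (2 * int n + 1))" "Xf n u m = int m - Yf n u m"
    "Ef n u m = (if Yf n u m = 0 then 2 * int n - min (max v 0) (2 * int n + 1) else 0)"
    using assms unfolding Xf_def Yf_def Ef_def stt_def v_def by auto
  have T1: "Yf n 1 m' = max 0 (int m' - 2 * int n)" "Xf n 1 m' = int m' - Yf n 1 m'"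
    "Ef n 1 m' = (if Yf n 1 m' = 0 then 2 * int n - min (max (int m') 0) (2 * int n + 1) else 0)" for m'
    unfolding Xf_def Yf_def Ef_def stt_def by auto
  consider "v \<le> 0" | "0 < v" "v \<le> 2 * int n" | "v > 2 * int n" by linarith
  then show ?thesis
  proof cases
    case 1
    have "Cf n n u m 1 (min m n)" unfolding Cf_def T T1 using 1 assms
      by (auto simp: v_def min_def max_def)
    then show ?thesis using assms by (intro exI[of _ "min m n"]) auto
  next
    case 2
    define m' where "m' = (if m < n then m else max (nat v) n)"
    have mm: "int m' = (if int m < int n then int m else max v (int n))" using 2 unfolding m'_def by auto
    have "Cf n n u m 1 m'" unfolding Cf_def T T1 mm using 2 assms
      by (auto simp: v_def min_def max_def)
    moreover have "int m' \<ge> 1" using mm assms 2 by auto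
    ultimately show ?thesis by (intro exI[of _ m']) auto
  next
    case 3
    define m' where "m' = nat v"
    have mm: "int m' = v" using 3 unfolding m'_def by auto
    have "Cf n n u m 1 m'" unfolding Cf_def T T1 mm using 3 assms
      by (auto simp: v_def min_def max_def)
    then show ?thesis using assms 3 mm by (intro exI[of _ m']) auto
  qed
qed

lemma match_MK:
  assumes "1 \<le> n" "1 \<le> m'"
  shows "\<exists>u m. u \<le> 0 \<and> 1 \<le> m \<and> Cf n n u m 1 m'"
proof (cases "m' < n")
  case True
  have "Cf n n (1 - int m') m' 1 m'"
  proof -
    have "1 \<le> int n" "1 \<le> int m'" "int m' < int n" using assms True by auto
    then show ?thesis unfolding Cf_def Xf_def Yf_def Ef_def stt_def
      by (smt (verit) min_def max_def)
  qed
  then show ?thesis using assms by (intro exI[of _ "1 - int m'"] exI[of _ m']) auto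
next
  case False
  have "Cf n n 0 (m' + 1) 1 m'"
  proof -
    have "1 \<le> int n" "1 \<le> int m'" "int m' \<ge> int n" "int (m' + 1) = int m' + 1" using assms False by auto
    then show ?thesis unfolding Cf_def Xf_def Yf_def Ef_def stt_def
      by (smt (verit) min_def max_def)
  qed
  then show ?thesis using assms by (intro exI[of _ 0] exI[of _ "m' + 1"]) auto
qed

theorem lemma5p9:
  fixes n :: nat and \<psi> :: hs
  assumes "n \<ge> 1" and "balanced \<psi>" and "hs_size \<psi> \<le> n"
  shows "models_st (Kn n) \<psi> \<longleftrightarrow> models_st (Mn n) \<psi>"
proof
  assume K: "models_st (Kn n) \<psi>"
  show "models_st (Mn n) \<psi>" unfolding models_st_def
  proof (intro allI impI)
    fix \<rho>' assume "is_init_trace (Mn n) \<rho>'"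
    then obtain m' where m': "1 \<le> m'" "\<rho>' = tr n 1 m'" using initM assms(1) by blast
    obtain u m where um: "u \<le> 0" "1 \<le> m" "Cf n n u m 1 m'" using match_MK[OF assms(1) m'(1)] by blast
    have "is_init_trace (Kn n) (tr n u m)" using initK um by blast
    then have s: "sat (Kn n) (tr n u m) \<psi>" using K unfolding models_st_def by blast
    have "Q n (hs_size \<psi>) (tr n u m) \<rho>'" using Q_mono[OF QI[OF um(2) m'(1) um(3)] assms(3)] m' by simp
    then show "sat (Mn n) \<rho>' \<psi>" using game[OF assms(2) order_refl] assms(3) s sat_M by simp
  qed
next
  assume M: "models_st (Mn n) \<psi>"
  show "models_st (Kn n) \<psi>" unfolding models_st_def
  proof (intro allI impI)
    fix \<rho> assume "is_init_trace (Kn n) \<rho>"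
    then obtain u m where um: "1 \<le> m" "\<rho> = tr n u m" "u \<le> 0" using initK by blast
    obtain m' where m': "1 \<le> m'" "Cf n n u m 1 m'" using match_KM[OF assms(1) um(1,3)] by blast
    have "is_init_trace (Mn n) (tr n 1 m')" using initM assms(1) m' by blast
    then have s: "sat (Kn n) (tr n 1 m') \<psi>" using M sat_M unfolding models_st_def by blast
    have "Q n (hs_size \<psi>) \<rho> (tr n 1 m')" using Q_mono[OF QI[OF um(1) m'(1) m'(2)] assms(3)] um by simp
    then show "sat (Kn n) \<rho> \<psi>" using game[OF assms(2) order_refl] assms(3) s by simp
  qed
qed

end
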